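(* Let $f$ be an orientation-preserving homeomorphism of the circle $\mathbb T=\mathbb R/\mathbb Z$ whose rotation number $\rho(f)$ is irrational. Assume $f$ is not topologically conjugate to a rotation. Then ${\rm h_{pol}}(f)=1$.
   Context: The rotation number of $f$ is the class in $\mathbb T$ of $\lim_{n\to\infty}F^n(x)/n$ for a lift $F:\mathbb R\to\mathbb R$ of $f$ (independent of $x$). Polynomial entropy: with $d_n^f(x,y)=\max_{0\le k\le n-1}d(f^k(x),f^k(y))$ for the standard metric $d$ on $\mathbb T$ and $G_n^f(\varepsilon)$ the minimal number of $d_n^f$-balls of radius $\varepsilon$ covering $\mathbb T$, ${\rm h_{pol}}(f)=\lim_{\varepsilon\to0}\limsup_{n\to\infty}\frac{\log G_n^f(\varepsilon)}{\log n}$. *)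

theory Defs
  imports "HOL-Analysis.Analysis"
begin

text \<open>The circle T = R/Z, realised as the unit circle in C via x |-> exp(2 pi i x).\<close>

definition circ :: "real \<Rightarrow> complex" where
  "circ x = cis (2 * pi * x)"

abbreviation Tcirc :: "complex set" where
  "Tcirc \<equiv> sphere 0 1"

text \<open>Standard metric of R/Z transported to the unit circle:
  distance from (arg w - arg z)/(2 pi) to the nearest integer.\<close>
definition tdist :: "complex \<Rightarrow> complex \<Rightarrow> real" where
  "tdist z w = \<bar>Arg (w / z)\<bar> / (2 * pi)"

definition is_lift :: "(complex \<Rightarrow> complex) \<Rightarrow> (real \<Rightarrow> real) \<Rightarrow> bool" where
  "is_lift f F \<longleftrightarrow> continuous_on UNIV F \<and> strict_mono F \<and> (\<forall>x. f (circ x) = circ (F x))"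

definition orient_pres_homeo :: "(complex \<Rightarrow> complex) \<Rightarrow> bool" where
  "orient_pres_homeo f \<longleftrightarrow> (\<exists>g. homeomorphism Tcirc Tcirc f g) \<and> (\<exists>F. is_lift f F)"

definition rotation_number :: "(complex \<Rightarrow> complex) \<Rightarrow> complex" where
  "rotation_number f = (let F = (SOME F. is_lift f F) in circ (lim (\<lambda>n. (F ^^ n) 0 / real n)))"

definition conj_to_rotation :: "(complex \<Rightarrow> complex) \<Rightarrow> bool" where
  "conj_to_rotation f \<longleftrightarrow>
     (\<exists>h g \<alpha>. homeomorphism Tcirc Tcirc h g \<and> (\<forall>z\<in>Tcirc. h (f z) = circ \<alpha> * h z))"

definition dyn_dist :: "(complex \<Rightarrow> complex) \<Rightarrow> nat \<Rightarrow> complex \<Rightarrow> complex \<Rightarrow> real" where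
  "dyn_dist f n z w = (MAX k\<in>{..<n}. tdist ((f ^^ k) z) ((f ^^ k) w))"

definition cover_num :: "(complex \<Rightarrow> complex) \<Rightarrow> nat \<Rightarrow> real \<Rightarrow> nat" where
  "cover_num f n \<epsilon> = Inf {card C | C. finite C \<and> C \<subseteq> Tcirc \<and>
       (\<forall>x\<in>Tcirc. \<exists>c\<in>C. dyn_dist f n c x < \<epsilon>)}"

definition hpol :: "(complex \<Rightarrow> complex) \<Rightarrow> ereal" where
  "hpol f = Lim (at_right 0)
     (\<lambda>\<epsilon>. limsup (\<lambda>n. ereal (ln (real (cover_num f n \<epsilon>)) / ln (real n))))"

end

theory Submission
  imports Defs
begin


definition nd :: "real \<Rightarrow> real" where "nd t = \<bar>t - of_int (round t)\<bar>"

lemma nd_le: "nd t \<le> \<bar>t - of_int k\<bar>"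
  unfolding nd_def by (rule round_diff_minimal)

lemma nd_le_abs: "nd t \<le> \<bar>t\<bar>"
  using nd_le[of t 0] by simp

lemma nd_nonneg: "nd t \<ge> 0" by (simp add: nd_def)

lemma nd_minus: "nd (- t) = nd t"
proof -
  have "nd (-t) \<le> nd t" using nd_le[of "-t" "- round t"] by (simp add: nd_def abs_minus_commute)
  moreover have "nd t \<le> nd (-t)" using nd_le[of "t" "- round (-t)"] by (simp add: nd_def abs_minus_commute)
  ultimately show ?thesis by simp
qed

lemma nd_triangle: "nd (s + t) \<le> nd s + nd t"
proof -
  have "nd (s+t) \<le> \<bar>s + t - of_int (round s + round t)\<bar>" by (rule nd_le)
  also have "\<dots> \<le> nd s + nd t" unfolding nd_def by simp
  finally show ?thesis .
qed

lemma nd_shift: "nd (t + of_int k) = nd t"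
proof -
  have "nd (t + of_int k) \<le> nd t" using nd_le[of "t + of_int k" "round t + k"] by (simp add: nd_def)
  moreover have "nd t \<le> nd (t + of_int k)" using nd_le[of "t" "round (t + of_int k) - k"] by (simp add: nd_def)
  ultimately show ?thesis by simp
qed

lemma nd_bounds: "\<exists>k::int. nd t = \<bar>t + of_int k\<bar>"
  unfolding nd_def by (rule exI[of _ "- round t"]) simp

lemma circ_add: "circ (x + y) = circ x * circ y"
  unfolding circ_def by (simp add: cis_mult distrib_left)

lemma circ_int: "circ (of_int k) = 1"
  unfolding circ_def
  by (simp add: cis_multiple_2pi)
  
lemma circ_shift: "circ (x + of_int k) = circ x"
  by (simp add: circ_add circ_int)

lemma norm_circ: "norm (circ x) = 1" unfolding circ_def by simp

lemma circ_in: "circ x \<in> Tcirc" by (simp add: norm_circ)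

lemma circ_ne0: "circ x \<noteq> 0" using norm_circ[of x] by auto

lemma circ_divide: "circ y / circ x = circ (y - x)"
  unfolding circ_def by (simp add: cis_divide right_diff_distrib)

lemma continuous_circ: "continuous_on S circ"
  unfolding circ_def cis_conv_exp by (intro continuous_intros)

lemma circ_surj: assumes "z \<in> Tcirc" shows "\<exists>x\<in>{0..<1}. circ x = z"
proof -
  have z0: "z \<noteq> 0" using assms by auto
  have "cis (Arg z) = z" using assms cis_Arg[OF z0] by (simp add: sgn_div_norm)
  hence "circ (Arg z / (2*pi)) = z" unfolding circ_def by simp
  hence "circ (frac (Arg z / (2*pi))) = z"
    by (metis circ_shift frac_def diff_conv_add_uminus of_int_minus)
  thus ?thesis by (intro bexI[of _ "frac (Arg z / (2*pi))"]) (auto simp: frac_lt_1)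
qed

lemma circ_eq_iff: "circ x = circ y \<longleftrightarrow> (\<exists>k::int. y = x + of_int k)"
proof
  assume "circ x = circ y"
  hence "circ (y - x) = 1" using circ_divide[of y x] circ_ne0[of x] by simp
  hence "exp (\<i> * complex_of_real (2*pi*(y-x))) = 1" unfolding circ_def cis_conv_exp by simp
  then obtain n::int where "Im (\<i> * complex_of_real (2*pi*(y-x))) = of_int (2 * n) * pi"
    unfolding exp_eq_1 by blast
  hence "2*pi*(y-x) = 2 * pi * of_int n" by (simp add: mult_ac)
  hence "y - x = of_int n" using pi_gt_zero by simp
  thus "\<exists>k::int. y = x + of_int k" by (intro exI[of _ n]) simp
next
  assume "\<exists>k::int. y = x + of_int k"
  thus "circ x = circ y" using circ_shift by auto
qed

lemma tdist_circ: "tdist (circ x) (circ y) = nd (y - x)"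
proof -
  define t where "t = y - x"
  define s where "s = t - of_int (round t)"
  have s1: "-1/2 \<le> s" "s \<le> 1/2" unfolding s_def
    using of_int_round_le[of t] of_int_round_ge[of t] by linarith+
  have "circ y / circ x = circ s" unfolding circ_divide s_def t_def
    by (metis circ_shift diff_conv_add_uminus of_int_minus)
  hence "\<bar>Arg (circ y / circ x)\<bar> = 2 * pi * \<bar>s\<bar>"
  proof (cases "s = -1/2")
    case True
    hence "circ s = cis pi" unfolding circ_def by (simp add: complex_eq_iff)
    moreover have "Arg (cis pi) = pi" by (rule Arg_cis) (simp add: pi_gt_zero)
    ultimately show ?thesis using True \<open>circ y / circ x = circ s\<close> by simp
  next
    case False
    hence s2: "-1/2 < s" using s1 by linarith
    have "2 * pi * (- (1/2)) < 2*pi* s" using s2 pi_gt_zero by (intro mult_strict_left_mono) auto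
    moreover have "2*pi* s \<le> 2*pi*(1/2)" using s1 pi_gt_zero by (intro mult_left_mono) auto
    ultimately have "2*pi* s \<in> {-pi<..pi}" by simp
    hence "Arg (cis (2*pi* s)) = 2*pi* s" by (rule Arg_cis)
    moreover have "\<bar>2*pi* s\<bar> = 2 * pi * \<bar>s\<bar>" using pi_gt_zero by (simp add: abs_mult)
    moreover have "circ y / circ x = cis (2*pi* s)" using \<open>circ y / circ x = circ s\<close> by (simp only: circ_def)
    ultimately show ?thesis by (simp only:)
  qed
  hence "tdist (circ x) (circ y) = \<bar>s\<bar>" unfolding tdist_def using pi_gt_zero by simp
  moreover have "nd (y - x) = \<bar>s\<bar>" unfolding nd_def s_def t_def by simp
  ultimately show ?thesis by simp
qed



locale circ_homeo =
  fixes f g :: "complex \<Rightarrow> complex" and F :: "real \<Rightarrow> real"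
  assumes homeo: "homeomorphism Tcirc Tcirc f g"
    and lift: "is_lift f F"
begin

lemma F_cont: "continuous_on S F"
  using lift unfolding is_lift_def by (meson continuous_on_subset subset_UNIV)

lemma F_smono: "strict_mono F" using lift unfolding is_lift_def by blast

lemma f_circ: "f (circ x) = circ (F x)" using lift unfolding is_lift_def by blast

lemma g_f: "z \<in> Tcirc \<Longrightarrow> g (f z) = z" using homeo unfolding homeomorphism_def by blast
lemma f_g: "z \<in> Tcirc \<Longrightarrow> f (g z) = z" using homeo unfolding homeomorphism_def by blast
lemma f_T: "z \<in> Tcirc \<Longrightarrow> f z \<in> Tcirc" using homeo unfolding homeomorphism_def by blast
lemma g_T: "z \<in> Tcirc \<Longrightarrow> g z \<in> Tcirc" using homeo unfolding homeomorphism_def by blast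

lemma F_plus1: "F (x + 1) = F x + 1"
proof -
  define d where "d x = F (x + 1) - F x" for x
  have dint: "\<exists>k::int. d x = of_int k" for x
  proof -
    have "circ (F (x+1)) = circ (F x)"
      using f_circ[of "x+1"] f_circ[of x] circ_shift[of x 1] by simp
    then obtain k::int where "F x = F (x+1) + of_int k" using circ_eq_iff by blast
    thus ?thesis unfolding d_def by (intro exI[of _ "-k"]) simp
  qed
  have "continuous_on UNIV (F \<circ> (\<lambda>x. x + 1))"
    by (intro continuous_on_compose continuous_intros F_cont)
  hence dcont: "continuous_on UNIV d" unfolding d_def comp_def
    by (intro continuous_intros F_cont)
  have "d constant_on UNIV"
  proof (rule continuous_discrete_range_constant[OF connected_UNIV dcont])
    fix x :: real
    show "\<exists>e>0. \<forall>y. y \<in> UNIV \<and> d y \<noteq> d x \<longrightarrow> e \<le> norm (d y - d x)"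
    proof (intro exI[of _ 1] conjI allI impI)
      fix y assume "y \<in> UNIV \<and> d y \<noteq> d x"
      moreover obtain a b :: int where "d y = of_int a" "d x = of_int b" using dint by meson
      ultimately show "1 \<le> norm (d y - d x)" by auto
    qed simp
  qed
  hence dconst: "d x = d 0" for x unfolding constant_on_def by auto
  obtain k::int where k: "d 0 = of_int k" using dint by blast
  have "k \<ge> 1"
  proof -
    have "F 0 < F 1" using F_smono by (simp add: strict_mono_less)
    hence "d 0 > 0" unfolding d_def by simp
    thus ?thesis using k by simp
  qed
  moreover have "k \<le> 1"
  proof (rule ccontr)
    assume "\<not> k \<le> 1"
    hence k2: "k \<ge> 2" by simp
    have F1: "F 1 = F 0 + of_int k" using k unfolding d_def by simp
    have "\<exists>y\<ge>0. y \<le> 1 \<and> F y = F 0 + 1"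
      using k2 F1 by (intro IVT' F_cont) auto
    then obtain y where y: "0 \<le> y" "y \<le> 1" "F y = F 0 + 1" by blast
    have "y \<noteq> 0" using y by auto
    moreover have "y \<noteq> 1" using y F1 k2 by auto
    moreover have "circ y = circ 0"
    proof -
      have "f (circ y) = f (circ 0)" using f_circ[of y] f_circ[of 0] y(3)
        circ_shift[of "F 0" 1] by simp
      hence "g (f (circ y)) = g (f (circ 0))" by simp
      thus ?thesis using g_f circ_in by simp
    qed
    then obtain j::int where "y = of_int j" using circ_eq_iff[of 0 y] by auto
    moreover have "0 \<le> j" "j \<le> 1" using y \<open>y = of_int j\<close> by simp_all
    ultimately show False using \<open>y = of_int j\<close> by (cases "j = 0") auto
  qed
  ultimately have "k = 1" by simp
  thus ?thesis using dconst[of x] k unfolding d_def by simp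
qed

lemma F_nat: "F (x + of_nat n) = F x + of_nat n"
  by (induction n arbitrary: x) (simp_all add: F_plus1 add.assoc[symmetric] del: add.assoc)

lemma F_int: "F (x + of_int k) = F x + of_int k"
proof (cases "k \<ge> 0")
  case True
  then show ?thesis using F_nat[of x "nat k"] by simp
next
  case False
  have "F (x + of_int k + of_nat (nat (-k))) = F (x + of_int k) + of_nat (nat (-k))" by (rule F_nat)
  then show ?thesis using False by simp
qed

lemma Fn_int: "(F^^n) (x + of_int k) = (F^^n) x + of_int k"
  by (induction n) (simp_all add: F_int)

lemma Fn_smono: "strict_mono (F^^n)"
  by (induction n) (simp_all add: strict_mono_def F_smono[unfolded strict_mono_def])

lemma Fn_mono: "x \<le> y \<Longrightarrow> (F^^n) x \<le> (F^^n) y"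
  using Fn_smono[of n] by (metis order.order_iff_strict strict_mono_less)

lemma Fn_less: "(F^^n) x < (F^^n) y \<longleftrightarrow> x < y"
  using Fn_smono[of n] by (simp add: strict_mono_less)

lemma Fn_le: "(F^^n) x \<le> (F^^n) y \<longleftrightarrow> x \<le> y"
  using Fn_smono[of n] by (simp add: strict_mono_less_eq)

lemma Fn_cont: "continuous_on S (F^^n)"
proof (induction n)
  case 0 then show ?case by (simp add: continuous_on_id)
next
  case (Suc n)
  have "continuous_on S (F \<circ> (F^^n))"
    by (rule continuous_on_compose[OF Suc]) (rule F_cont)
  then show ?case by (simp add: comp_def)
qed

lemma fn_circ: "(f^^n) (circ x) = circ ((F^^n) x)"
  by (induction n) (simp_all add: f_circ)

lemma fn_T: "z \<in> Tcirc \<Longrightarrow> (f^^n) z \<in> Tcirc"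
proof (induction n)
  case (Suc n) show ?case unfolding funpow.simps comp_def by (rule f_T[OF Suc.IH[OF Suc.prems]])
qed simp

lemma gn_T: "z \<in> Tcirc \<Longrightarrow> (g^^n) z \<in> Tcirc"
proof (induction n)
  case (Suc n) show ?case unfolding funpow.simps comp_def by (rule g_T[OF Suc.IH[OF Suc.prems]])
qed simp

lemma f_gn: "z \<in> Tcirc \<Longrightarrow> j \<le> k \<Longrightarrow> (f^^k) ((g^^j) z) = (f^^(k-j)) z"
proof (induction j arbitrary: k)
  case 0 then show ?case by simp
next
  case (Suc j)
  then obtain k' where k': "k = Suc k'" "j \<le> k'" by (cases k) auto
  have e1: "(g^^Suc j) z = g ((g^^j) z)" by simp
  have e2: "(f^^Suc k') w = (f^^k') (f w)" for w by (simp add: funpow_Suc_right del: funpow.simps)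
  have "(f^^k) ((g^^Suc j) z) = (f^^k') (f (g ((g^^j) z)))"
    using k' e2 by (simp only: e1)
  also have "\<dots> = (f^^k') ((g^^j) z)" using f_g gn_T Suc.prems by simp
  also have "\<dots> = (f^^(k'-j)) z" using Suc k' by simp
  finally show ?case using k' by simp
qed

end


definition rotnum :: "(real \<Rightarrow> real) \<Rightarrow> real" where
  "rotnum F = lim (\<lambda>n. (F^^n) 0 / real n)"

context circ_homeo begin

abbreviation "a n \<equiv> (F^^n) 0"

lemma dev: "\<bar>(F^^n) x - x - a n\<bar> \<le> 1"
proof -
  define i where "i = floor x"
  have xi: "of_int i \<le> x" "x < of_int i + 1" unfolding i_def by linarith+
  have l: "(F^^n) (of_int i) = a n + of_int i" using Fn_int[of n 0 i] by simp
  have u: "(F^^n) (of_int i + 1) = a n + of_int i + 1" using Fn_int[of n 0 "i+1"] by simp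
  have "(F^^n) (of_int i) \<le> (F^^n) x" using xi by (intro Fn_mono) simp
  moreover have "(F^^n) x \<le> (F^^n) (of_int i + 1)" using xi by (intro Fn_mono) simp
  ultimately show ?thesis using l u xi by linarith
qed

lemma mult_dev: "\<bar>(F^^(m*n)) 0 - real m * a n\<bar> \<le> real m"
proof (induction m)
  case 0 then show ?case by simp
next
  case (Suc m)
  have "(F^^(Suc m * n)) 0 = (F^^n) ((F^^(m*n)) 0)"
    by (simp add: funpow_add)
  moreover have "\<bar>(F^^n) ((F^^(m*n)) 0) - (F^^(m*n)) 0 - a n\<bar> \<le> 1" by (rule dev)
  ultimately show ?case using Suc.IH by (simp add: algebra_simps)
qed

lemma cauchy_bound:
  assumes "m \<ge> 1" "n \<ge> 1"
  shows "\<bar>a m / real m - a n / real n\<bar> \<le> 1 / real m + 1 / real n"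
proof -
  have h1: "\<bar>(F^^(m*n)) 0 - real m * a n\<bar> \<le> real m" by (rule mult_dev)
  have h2: "\<bar>(F^^(n*m)) 0 - real n * a m\<bar> \<le> real n" by (rule mult_dev)
  have "\<bar>real n * a m - real m * a n\<bar> \<le> real m + real n"
    using h1 h2 by (simp add: mult.commute)
  hence "\<bar>real n * a m - real m * a n\<bar> / (real m * real n) \<le> (real m + real n) / (real m * real n)"
    using assms by (intro divide_right_mono) auto
  moreover have "\<bar>real n * a m - real m * a n\<bar> / (real m * real n) = \<bar>a m / real m - a n / real n\<bar>"
    using assms by (simp add: field_simps abs_divide abs_mult)
  moreover have "(real m + real n) / (real m * real n) = 1 / real m + 1 / real n"
    using assms by (simp add: field_simps)
  ultimately show ?thesis by simp
qed

lemma rot_convergent: "convergent (\<lambda>n. a n / real n)"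
proof -
  have "Cauchy (\<lambda>n. a n / real n)"
  proof (rule metric_CauchyI)
    fix e :: real assume e: "e > 0"
    obtain M :: nat where M: "M > 2 / e" using reals_Archimedean2 by blast
    have M1: "M \<ge> 1" using M e by (cases M) (auto simp: divide_pos_pos)
    have "2 / real M < e" using M e M1 by (simp add: field_simps)
    show "\<exists>M. \<forall>m\<ge>M. \<forall>n\<ge>M. dist (a m / real m) (a n / real n) < e"
    proof (intro exI[of _ M] allI impI)
      fix m n assume mn: "m \<ge> M" "n \<ge> M"
      have "1 / real m \<le> 1 / real M" using mn M1 by (intro divide_left_mono) auto
      moreover have "1 / real n \<le> 1 / real M" using mn M1 by (intro divide_left_mono) auto
      moreover have "\<bar>a m / real m - a n / real n\<bar> \<le> 1 / real m + 1 / real n"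
        using mn M1 by (intro cauchy_bound) auto
      ultimately show "dist (a m / real m) (a n / real n) < e"
        using \<open>2 / real M < e\<close> by (simp add: dist_real_def)
    qed
  qed
  thus ?thesis by (simp add: Cauchy_convergent_iff)
qed

lemma rot_lim: "(\<lambda>n. a n / real n) \<longlonglongrightarrow> rotnum F"
  unfolding rotnum_def using rot_convergent by (simp add: convergent_LIMSEQ_iff)

lemma rot_bound: assumes "n \<ge> 1" shows "\<bar>rotnum F - a n / real n\<bar> \<le> 1 / real n"
proof -
  have t1: "(\<lambda>m. \<bar>a m / real m - a n / real n\<bar>) \<longlonglongrightarrow> \<bar>rotnum F - a n / real n\<bar>"
    by (intro tendsto_intros rot_lim)
  have t2: "(\<lambda>m. 1 / real m + 1 / real n) \<longlonglongrightarrow> 0 + 1 / real n"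
    by (intro tendsto_intros lim_1_over_n)
  have ev: "eventually (\<lambda>m. \<bar>a m / real m - a n / real n\<bar> \<le> 1 / real m + 1 / real n) sequentially"
    using eventually_ge_at_top[of 1] by eventually_elim (use assms cauchy_bound in auto)
  show ?thesis using tendsto_le[OF _ t2 t1 ev] by simp
qed

end


locale circ_irr = circ_homeo +
  assumes irr: "rotnum F \<notin> \<rat>"
begin

abbreviation "\<rho> \<equiv> rotnum F"

lemma irr_ne: "n \<ge> 1 \<Longrightarrow> real n * \<rho> + of_int p \<noteq> 0"
proof
  assume n: "n \<ge> 1" and e: "real n * \<rho> + of_int p = 0"
  hence "\<rho> = - of_int p / real n" using n by (simp add: field_simps)
  hence "\<rho> \<in> \<rat>" by simp
  thus False using irr by simp
qed

lemma Fn_mult_shift: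
  assumes "(F^^n) y + of_int p = y"
  shows "(F^^(k*n)) y = y - of_int k * of_int p"
proof (induction k)
  case 0 then show ?case by simp
next
  case (Suc k)
  have "(F^^(Suc k * n)) y = (F^^n) ((F^^(k*n)) y)" by (simp add: funpow_add)
  also have "\<dots> = (F^^n) (y + of_int (- (int k * p)))" using Suc by simp
  also have "\<dots> = (F^^n) y - of_int (int k * p)" using Fn_int[of n y "- (int k * p)"] by simp
  finally show ?case using assms by (simp add: algebra_simps)
qed

lemma small_imp_zero:
  assumes "\<And>k::nat. k \<ge> 1 \<Longrightarrow> \<bar>x\<bar> \<le> c / real k" shows "x = 0"
proof (rule ccontr)
  assume "x \<noteq> 0"
  hence xp: "\<bar>x\<bar> > 0" by simp
  obtain k :: nat where k: "k > c / \<bar>x\<bar>" using reals_Archimedean2 by blast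
  have "c \<ge> 0" using assms[of 1] xp by simp
  have "c / \<bar>x\<bar> \<ge> 0" using \<open>c \<ge> 0\<close> xp by simp
  hence "real k > 0" using k by linarith
  hence k1: "k \<ge> 1" by simp
  have "\<bar>x\<bar> \<le> c / real k" using assms k1 by simp
  hence "\<bar>x\<bar> * real k \<le> c" using k1 by (simp add: field_simps)
  moreover have "c < real k * \<bar>x\<bar>" using k xp by (simp add: field_simps)
  ultimately show False by (simp add: mult.commute)
qed

lemma no_fix: assumes n: "n \<ge> 1" shows "(F^^n) y + of_int p \<noteq> y"
proof
  assume e: "(F^^n) y + of_int p = y"
  have "\<bar>\<rho> + of_int p / real n\<bar> \<le> (2 / real n) / real k" if k: "k \<ge> 1" for k :: nat
  proof -
    have kn: "k * n \<ge> 1" using k n by simp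
    have d: "\<bar>(F^^(k*n)) y - y - a (k*n)\<bar> \<le> 1" by (rule dev)
    hence d2: "\<bar>a (k*n) + real k * of_int p\<bar> \<le> 1" using Fn_mult_shift[OF e, of k] by simp
    have r: "\<bar>\<rho> - a (k*n) / real (k*n)\<bar> \<le> 1 / real (k*n)" using kn by (rule rot_bound)
    have "\<bar>a (k*n) / real (k*n) + of_int p / real n\<bar> = \<bar>a (k*n) + real k * of_int p\<bar> / real (k*n)"
      using k n by (simp add: field_simps abs_divide)
    also have "\<dots> \<le> 1 / real (k*n)" using d2 kn by (intro divide_right_mono) auto
    finally have "\<bar>\<rho> + of_int p / real n\<bar> \<le> 2 / real (k*n)" using r by linarith
    thus ?thesis by (simp add: field_simps)
  qed
  hence "\<rho> + of_int p / real n = 0" by (intro small_imp_zero[where c="2 / real n"]) auto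
  hence "real n * \<rho> + of_int p = 0" using n by (simp add: field_simps)
  thus False using irr_ne[OF n] by simp
qed

lemma dichotomy: assumes n: "n \<ge> 1"
  shows "(\<forall>y. (F^^n) y + of_int p > y) \<or> (\<forall>y. (F^^n) y + of_int p < y)"
proof (rule ccontr)
  assume "\<not> ?thesis"
  then obtain u v where u0: "\<not> ((F^^n) u + of_int p > u)" and v0: "\<not> ((F^^n) v + of_int p < v)" by blast
  hence u: "(F^^n) u + of_int p \<le> u" and v: "(F^^n) v + of_int p \<ge> v" by auto
  define h where "h y = (F^^n) y + of_int p - y" for y
  have hc: "continuous_on S h" for S unfolding h_def by (intro continuous_intros Fn_cont)
  have "\<exists>y. h y = 0"
  proof (cases "u \<le> v")
    case True
    then show ?thesis using IVT'[of h u 0 v] hc u v unfolding h_def by auto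
  next
    case False
    then show ?thesis using IVT2'[of h u 0 v] hc u v unfolding h_def by auto
  qed
  then obtain y where "h y = 0" by blast
  thus False using no_fix[OF n, of y p] unfolding h_def by simp
qed

lemma pos_case: assumes n: "n \<ge> 1" and pos: "\<And>y. (F^^n) y + of_int p > y"
  shows "real n * \<rho> + of_int p > 0"
proof -
  have A: "(F^^(k*n)) 0 + real k * of_int p \<ge> 0" for k
  proof (induction k)
    case 0 then show ?case by simp
  next
    case (Suc k)
    have "(F^^(Suc k * n)) 0 = (F^^n) ((F^^(k*n)) 0)" by (simp add: funpow_add)
    moreover have "(F^^n) ((F^^(k*n)) 0) + of_int p > (F^^(k*n)) 0" by (rule pos)
    ultimately show ?case using Suc by (simp add: algebra_simps)
  qed
  have "\<rho> \<ge> - of_int p / real n - 1 / real n / real k" if k: "k \<ge> 1" for k :: nat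
  proof -
    have kn: "k * n \<ge> 1" using k n by simp
    have r: "\<bar>\<rho> - a (k*n) / real (k*n)\<bar> \<le> 1 / real (k*n)" using kn by (rule rot_bound)
    have "a (k*n) / real (k*n) \<ge> - (real k * of_int p) / real (k*n)"
      using A[of k] kn by (intro divide_right_mono) auto
    also have "- (real k * of_int p) / real (k*n) = - of_int p / real n" using k by simp
    finally show ?thesis using r by (simp add: field_simps)
  qed
  hence "\<rho> \<ge> - of_int p / real n"
  proof -
    assume H: "\<And>k::nat. k \<ge> 1 \<Longrightarrow> \<rho> \<ge> - of_int p / real n - 1 / real n / real k"
    show ?thesis
    proof (rule ccontr)
      assume "\<not> ?thesis"
      hence ne: "min 0 (\<rho> + of_int p / real n) \<noteq> 0" by simp
      have "min 0 (\<rho> + of_int p / real n) = 0"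
      proof (rule small_imp_zero[where c="1 / real n"])
        fix k :: nat assume "k \<ge> 1"
        have c0: "(1 / real n) / real k \<ge> 0" by simp
        have "\<bar>min 0 (\<rho> + of_int p / real n)\<bar> = (if 0 \<le> \<rho> + of_int p / real n then 0 else \<bar>\<rho> + of_int p / real n\<bar>)" by auto
        thus "\<bar>min 0 (\<rho> + of_int p / real n)\<bar> \<le> (1 / real n) / real k"
          using H[OF \<open>k \<ge> 1\<close>] c0 by (auto split: if_splits)
      qed
      thus False using ne by simp
    qed
  qed
  hence "real n * \<rho> + of_int p \<ge> 0" using n by (simp add: field_simps)
  thus ?thesis using irr_ne[OF n, of p] by simp
qed

lemma neg_case: assumes n: "n \<ge> 1" and neg: "\<And>y. (F^^n) y + of_int p < y"
  shows "real n * \<rho> + of_int p < 0"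
proof -
  have A: "(F^^(k*n)) 0 + real k * of_int p \<le> 0" for k
  proof (induction k)
    case 0 then show ?case by simp
  next
    case (Suc k)
    have "(F^^(Suc k * n)) 0 = (F^^n) ((F^^(k*n)) 0)" by (simp add: funpow_add)
    moreover have "(F^^n) ((F^^(k*n)) 0) + of_int p < (F^^(k*n)) 0" by (rule neg)
    ultimately show ?case using Suc by (simp add: algebra_simps)
  qed
  have "\<rho> \<le> - of_int p / real n + 1 / real n / real k" if k: "k \<ge> 1" for k :: nat
  proof -
    have kn: "k * n \<ge> 1" using k n by simp
    have r: "\<bar>\<rho> - a (k*n) / real (k*n)\<bar> \<le> 1 / real (k*n)" using kn by (rule rot_bound)
    have "a (k*n) / real (k*n) \<le> - (real k * of_int p) / real (k*n)"
      using A[of k] kn by (intro divide_right_mono) auto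
    also have "- (real k * of_int p) / real (k*n) = - of_int p / real n" using k by simp
    finally show ?thesis using r by (simp add: field_simps)
  qed
  hence "\<rho> \<le> - of_int p / real n"
  proof -
    assume H: "\<And>k::nat. k \<ge> 1 \<Longrightarrow> \<rho> \<le> - of_int p / real n + 1 / real n / real k"
    show ?thesis
    proof (rule ccontr)
      assume "\<not> ?thesis"
      hence ne: "max 0 (\<rho> + of_int p / real n) \<noteq> 0" by simp
      have "max 0 (\<rho> + of_int p / real n) = 0"
      proof (rule small_imp_zero[where c="1 / real n"])
        fix k :: nat assume "k \<ge> 1"
        have c0: "(1 / real n) / real k \<ge> 0" by simp
        have "\<bar>max 0 (\<rho> + of_int p / real n)\<bar> = (if 0 \<le> \<rho> + of_int p / real n then \<bar>\<rho> + of_int p / real n\<bar> else 0)" by auto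
        thus "\<bar>max 0 (\<rho> + of_int p / real n)\<bar> \<le> (1 / real n) / real k"
          using H[OF \<open>k \<ge> 1\<close>] c0 by (auto split: if_splits)
      qed
      thus False using ne by simp
    qed
  qed
  hence "real n * \<rho> + of_int p \<le> 0" using n by (simp add: field_simps)
  thus ?thesis using irr_ne[OF n, of p] by simp
qed

lemma sign_gt: "(F^^n) y + of_int p > y \<longleftrightarrow> real n * \<rho> + of_int p > 0"
  and sign_lt: "(F^^n) y + of_int p < y \<longleftrightarrow> real n * \<rho> + of_int p < 0"
proof -
  have "((F^^n) y + of_int p > y \<longleftrightarrow> real n * \<rho> + of_int p > 0) \<and>
        ((F^^n) y + of_int p < y \<longleftrightarrow> real n * \<rho> + of_int p < 0)"
  proof (cases "n = 0")
    case True then show ?thesis by simp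
  next
    case False
    hence n: "n \<ge> 1" by simp
    show ?thesis
    proof (cases "\<forall>y. (F^^n) y + of_int p > y")
      case True
      have "0 < real n * \<rho> + of_int p" by (rule pos_case[OF n]) (use True in auto)
      then show ?thesis using True[rule_format, of y] by linarith
    next
      case False
      hence T: "\<forall>y. (F^^n) y + of_int p < y" using dichotomy[OF n, of p] by auto
      have "real n * \<rho> + of_int p < 0" by (rule neg_case[OF n]) (use T in auto)
      then show ?thesis using T[rule_format, of y] by linarith
    qed
  qed
  thus "(F^^n) y + of_int p > y \<longleftrightarrow> real n * \<rho> + of_int p > 0"
    "(F^^n) y + of_int p < y \<longleftrightarrow> real n * \<rho> + of_int p < 0" by auto
qed

lemma ord2: "(F^^n) 0 + of_int p \<le> (F^^m) 0 + of_int q \<longleftrightarrow>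
    real n * \<rho> + of_int p \<le> real m * \<rho> + of_int q"
proof (cases "m \<le> n")
  case True
  define y where "y = (F^^m) 0"
  have "(F^^n) 0 = (F^^((n-m)+m)) 0" using True by simp
  also have "\<dots> = (F^^(n-m)) y" unfolding y_def by (simp only: funpow_add comp_apply)
  finally have "(F^^n) 0 = (F^^(n-m)) y" .
  hence "(F^^n) 0 + of_int p \<le> (F^^m) 0 + of_int q \<longleftrightarrow> \<not> ((F^^(n-m)) y + of_int (p - q) > y)"
    unfolding y_def by auto
  also have "\<dots> \<longleftrightarrow> \<not> (real (n-m) * \<rho> + of_int (p-q) > 0)" by (simp only: sign_gt)
  also have "\<dots> \<longleftrightarrow> real n * \<rho> + of_int p \<le> real m * \<rho> + of_int q"
    using True by (simp add: of_nat_diff algebra_simps) (simp add: not_less)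
  finally show ?thesis .
next
  case False
  define y where "y = (F^^n) 0"
  have "(F^^m) 0 = (F^^((m-n)+n)) 0" using False by simp
  also have "\<dots> = (F^^(m-n)) y" unfolding y_def by (simp only: funpow_add comp_apply)
  finally have "(F^^m) 0 = (F^^(m-n)) y" .
  hence "(F^^n) 0 + of_int p \<le> (F^^m) 0 + of_int q \<longleftrightarrow> \<not> ((F^^(m-n)) y + of_int (q - p) < y)"
    unfolding y_def by auto
  also have "\<dots> \<longleftrightarrow> \<not> (real (m-n) * \<rho> + of_int (q-p) < 0)" by (simp only: sign_lt)
  also have "\<dots> \<longleftrightarrow> real n * \<rho> + of_int p \<le> real m * \<rho> + of_int q"
    using False by (simp add: of_nat_diff algebra_simps) (simp add: not_less)
  finally show ?thesis .
qed

end


lemma mid_abs: "\<bar>(t::real) - (xlo+xhi)/2\<bar> < (xhi-xlo)/2 \<Longrightarrow> xlo < t \<and> t < xhi"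
proof -
  assume "\<bar>(t::real) - (xlo+xhi)/2\<bar> < (xhi-xlo)/2"
  hence A: "t - (xlo+xhi)/2 < (xhi-xlo)/2" "- (t - (xlo+xhi)/2) < (xhi-xlo)/2" unfolding abs_less_iff by auto
  have "xlo < t" using A(2) by (simp add: field_simps)
  moreover have "t < xhi" using A(1) by (simp add: field_simps)
  ultimately show ?thesis by blast
qed

context circ_irr begin

lemma dense_orbit: assumes "xlo < xhi"
  shows "\<exists>n::nat. \<exists>p::int. xlo < real n * \<rho> + of_int p \<and> real n * \<rho> + of_int p < xhi"
proof -
  obtain h k :: int where k: "k > 0" "\<bar>of_int k * \<rho> - of_int h - (xlo+xhi)/2\<bar> < (xhi-xlo)/2"
  proof -
    have e: "(xhi-xlo)/2 > 0" using assms by simp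
    show ?thesis
      by (rule sequence_of_fractional_parts_is_dense[OF irr e, where \<alpha>="(xlo+xhi)/2"]) (rule that)
  qed
  have rk: "real (nat k) = of_int k" using k by simp
  have "xlo < real (nat k) * \<rho> + of_int (-h) \<and> real (nat k) * \<rho> + of_int (-h) < xhi"
    unfolding rk of_int_minus using mid_abs[OF k(2)] by simp
  thus ?thesis by blast
qed

definition Hset :: "real \<Rightarrow> real set" where
  "Hset x = {real n * \<rho> + of_int p | n p. (F^^n) 0 + of_int p \<le> x}"

definition H :: "real \<Rightarrow> real" where "H x = Sup (Hset x)"

lemma Hset_I: "(F^^n) 0 + of_int p \<le> x \<Longrightarrow> real n * \<rho> + of_int p \<in> Hset x"
  unfolding Hset_def by blast

lemma Hset_ne: "of_int (floor x) \<in> Hset x"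
  unfolding Hset_def by (rule CollectI, rule exI[of _ 0], rule exI[of _ "floor x"]) simp

lemma Hset_bdd: assumes "s \<in> Hset x" shows "s \<le> of_int (ceiling x) + 1"
proof -
  obtain n p where s: "s = real n * \<rho> + of_int p" and le: "(F^^n) 0 + of_int p \<le> x"
    using assms unfolding Hset_def by blast
  have "(F^^n) 0 + of_int p < (F^^0) 0 + of_int (ceiling x + 1)" using le
    by simp linarith
  hence "\<not> ((F^^0) 0 + of_int (ceiling x + 1) \<le> (F^^n) 0 + of_int p)" by simp
  hence "\<not> (real 0 * \<rho> + of_int (ceiling x + 1) \<le> real n * \<rho> + of_int p)"
    using ord2[of 0 "ceiling x + 1" n p] by blast
  thus ?thesis using s by simp
qed

lemma Hset_bddA: "bdd_above (Hset x)"
  using Hset_bdd by (meson bdd_aboveI)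

lemma H_ge: "s \<in> Hset x \<Longrightarrow> s \<le> H x"
  unfolding H_def by (rule cSup_upper[OF _ Hset_bddA])

lemma H_le: "(\<And>s. s \<in> Hset x \<Longrightarrow> s \<le> c) \<Longrightarrow> H x \<le> c"
  unfolding H_def by (rule cSup_least) (use Hset_ne in auto)

lemma H_orbit: "H ((F^^n) 0 + of_int p) = real n * \<rho> + of_int p"
proof (rule antisym)
  show "real n * \<rho> + of_int p \<le> H ((F^^n) 0 + of_int p)"
    by (rule H_ge) (auto simp: Hset_def)
  show "H ((F^^n) 0 + of_int p) \<le> real n * \<rho> + of_int p"
  proof (rule H_le)
    fix s assume "s \<in> Hset ((F^^n) 0 + of_int p)"
    then obtain m q where "s = real m * \<rho> + of_int q" "(F^^m) 0 + of_int q \<le> (F^^n) 0 + of_int p"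
      unfolding Hset_def by blast
    thus "s \<le> real n * \<rho> + of_int p" by (simp add: ord2)
  qed
qed

lemma H_mono: assumes "x \<le> y" shows "H x \<le> H y"
proof (rule H_le)
  fix s assume "s \<in> Hset x"
  then obtain n p where s: "s = real n * \<rho> + of_int p" "(F^^n) 0 + of_int p \<le> x"
    unfolding Hset_def by blast
  have "real n * \<rho> + of_int p \<in> Hset y" using s assms by (intro Hset_I) simp
  thus "s \<le> H y" using s H_ge by simp
qed

lemma H_shift: "H (x + of_int k) = H x + of_int k"
proof (rule antisym)
  show "H (x + of_int k) \<le> H x + of_int k"
  proof (rule H_le)
    fix s assume "s \<in> Hset (x + of_int k)"
    then obtain n p where s: "s = real n * \<rho> + of_int p" "(F^^n) 0 + of_int p \<le> x + of_int k"
      unfolding Hset_def by blast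
    have "real n * \<rho> + of_int (p - k) \<in> Hset x" using s by (intro Hset_I) simp
    hence "real n * \<rho> + of_int (p - k) \<le> H x" by (rule H_ge)
    thus "s \<le> H x + of_int k" using s by simp
  qed
  show "H x + of_int k \<le> H (x + of_int k)"
  proof -
    have "H x \<le> H (x + of_int k) - of_int k"
    proof (rule H_le)
      fix s assume "s \<in> Hset x"
      then obtain n p where s: "s = real n * \<rho> + of_int p" "(F^^n) 0 + of_int p \<le> x"
        unfolding Hset_def by blast
      have "real n * \<rho> + of_int (p + k) \<in> Hset (x + of_int k)" using s by (intro Hset_I) simp
      hence "real n * \<rho> + of_int (p + k) \<le> H (x + of_int k)" by (rule H_ge)
      thus "s \<le> H (x + of_int k) - of_int k" using s by simp
    qed
    thus ?thesis by simp
  qed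
qed

lemma F_orbit: "F ((F^^n) 0 + of_int p) = (F^^Suc n) 0 + of_int p"
  using F_int[of "(F^^n) 0" p] by simp

lemma H_F: "H (F x) = H x + \<rho>"
proof (rule antisym)
  show "H x + \<rho> \<le> H (F x)"
  proof -
    have "H x \<le> H (F x) - \<rho>"
    proof (rule H_le)
      fix s assume "s \<in> Hset x"
      then obtain n p where s: "s = real n * \<rho> + of_int p" "(F^^n) 0 + of_int p \<le> x"
        unfolding Hset_def by blast
      have "F ((F^^n) 0 + of_int p) \<le> F x" using s(2) F_smono by (simp add: strict_mono_less_eq)
      hence "(F^^Suc n) 0 + of_int p \<le> F x" by (simp only: F_orbit)
      hence "real (Suc n) * \<rho> + of_int p \<in> Hset (F x)" by (rule Hset_I)
      hence "real (Suc n) * \<rho> + of_int p \<le> H (F x)" by (rule H_ge)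
      thus "s \<le> H (F x) - \<rho>" using s by (simp add: algebra_simps)
    qed
    thus ?thesis by simp
  qed
  show "H (F x) \<le> H x + \<rho>"
  proof (rule H_le)
    fix s assume "s \<in> Hset (F x)"
    then obtain n p where s: "s = real n * \<rho> + of_int p" "(F^^n) 0 + of_int p \<le> F x"
      unfolding Hset_def by blast
    show "s \<le> H x + \<rho>"
    proof (cases n)
      case (Suc m)
      have "F ((F^^m) 0 + of_int p) \<le> F x" using s(2) Suc by (simp only: F_orbit)
      hence "(F^^m) 0 + of_int p \<le> x" using F_smono by (simp add: strict_mono_less_eq)
      hence "real m * \<rho> + of_int p \<in> Hset x" by (rule Hset_I)
      hence "real m * \<rho> + of_int p \<le> H x" by (rule H_ge)
      thus ?thesis using s Suc by (simp add: algebra_simps)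
    next
      case 0
      hence pF: "of_int p \<le> F x" using s by simp
      show ?thesis
      proof (rule ccontr)
        assume "\<not> s \<le> H x + \<rho>"
        hence "H x < of_int p - \<rho>" using s 0 by simp
        then obtain m q where mq: "H x < real m * \<rho> + of_int q" "real m * \<rho> + of_int q < of_int p - \<rho>"
          using dense_orbit by blast
        have "real (Suc m) * \<rho> + of_int q < real 0 * \<rho> + of_int p" using mq by (simp add: algebra_simps)
        hence "\<not> ((F^^0) 0 + of_int p \<le> (F^^Suc m) 0 + of_int q)" by (simp only: ord2)
        hence "(F^^Suc m) 0 + of_int q < F x" using pF by simp
        hence "F ((F^^m) 0 + of_int q) < F x" by (simp only: F_orbit)
        hence "(F^^m) 0 + of_int q < x" using F_smono by (simp add: strict_mono_less)
        hence "real m * \<rho> + of_int q \<in> Hset x" using Hset_I[of m q x] by simp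
        hence "real m * \<rho> + of_int q \<le> H x" by (rule H_ge)
        thus False using mq by simp
      qed
    qed
  qed
qed

lemma H_Fn: "H ((F^^i) x) = H x + real i * \<rho>"
  by (induction i) (simp_all add: H_F algebra_simps)

lemma H_dense: "xlo < xhi \<Longrightarrow> \<exists>u. xlo < H u \<and> H u < xhi"
proof -
  assume "xlo < xhi"
  then obtain n p where "xlo < real n * \<rho> + of_int p" "real n * \<rho> + of_int p < xhi"
    using dense_orbit by blast
  thus ?thesis by (intro exI[of _ "(F^^n) 0 + of_int p"]) (simp add: H_orbit)
qed

lemma H_cont: "continuous_on UNIV H"
proof -
  have "isCont H x" for x
  proof (rule continuous_at_eps_delta[THEN iffD2], intro allI impI)
    fix e :: real assume e: "e > 0"
    obtain u where u: "H x - e < H u" "H u < H x" using H_dense[of "H x - e" "H x"] e by auto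
    obtain v where v: "H x < H v" "H v < H x + e" using H_dense[of "H x" "H x + e"] e by auto
    have ux: "u < x"
    proof (rule ccontr)
      assume "\<not> u < x" hence "H x \<le> H u" by (intro H_mono) simp
      thus False using u(2) by simp
    qed
    have xv: "x < v"
    proof (rule ccontr)
      assume "\<not> x < v" hence "H v \<le> H x" by (intro H_mono) simp
      thus False using v(1) by simp
    qed
    show "\<exists>d>0. \<forall>y. dist y x < d \<longrightarrow> dist (H y) (H x) < e"
    proof (intro exI[of _ "min (x - u) (v - x)"] conjI allI impI)
      show "min (x - u) (v - x) > 0" using ux xv by simp
      fix y assume "dist y x < min (x - u) (v - x)"
      hence "u \<le> y" "y \<le> v" by (auto simp: dist_real_def)
      hence "H u \<le> H y" "H y \<le> H v" by (simp_all add: H_mono)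
      thus "dist (H y) (H x) < e" using u v by (simp add: dist_real_def abs_less_iff)
    qed
  qed
  thus ?thesis by (simp add: continuous_at_imp_continuous_on)
qed

end


lemma circ_image01: "circ ` {0..1} = Tcirc"
proof
  show "circ ` {0..1} \<subseteq> Tcirc" using circ_in by auto
  show "Tcirc \<subseteq> circ ` {0..1}"
  proof
    fix z assume "z \<in> Tcirc"
    then obtain x where "x \<in> {0..<1}" "circ x = z" using circ_surj by blast
    thus "z \<in> circ ` {0..1}" by force
  qed
qed

lemma cont_via_circ:
  assumes c: "continuous_on {0..1} (h \<circ> circ)" and hT: "h \<in> Tcirc \<rightarrow> Tcirc"
  shows "continuous_on Tcirc h"
proof -
  have ok: "openin (top_of_set Tcirc) (Tcirc \<inter> h -` U)" if U: "openin (top_of_set Tcirc) U" for U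
  proof -
    have hc: "(h \<circ> circ) \<in> {0..1} \<rightarrow> Tcirc" using hT circ_in by auto
    have "openin (top_of_set {0..1}) ({0..1} \<inter> (h \<circ> circ) -` U)"
      using c U continuous_on_open_gen[OF hc] by blast
    moreover have "{0..1} \<inter> (h \<circ> circ) -` U = {0..1} \<inter> circ -` (Tcirc \<inter> h -` U)"
      using circ_in by auto
    ultimately have "openin (top_of_set {0..1}) ({0..1} \<inter> circ -` (Tcirc \<inter> h -` U))" by simp
    thus ?thesis
      using Abstract_Topology_2.continuous_imp_quotient_map[of "{0..1}" circ Tcirc "Tcirc \<inter> h -` U"]
        continuous_circ circ_image01 by auto
  qed
  show ?thesis using continuous_on_open_gen[OF hT] ok by blast
qed

context circ_irr begin

definition hh :: "complex \<Rightarrow> complex" where "hh z = circ (H (SOME x. circ x = z))"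

lemma hh_circ: "hh (circ y) = circ (H y)"
proof -
  define x where "x = (SOME x. circ x = circ y)"
  have "circ x = circ y" unfolding x_def by (rule someI) simp
  then obtain k::int where "x = y + of_int k" using circ_eq_iff[of y x] by (auto simp: eq_commute)
  hence "H x = H y + of_int k" using H_shift by simp
  thus ?thesis unfolding hh_def x_def[symmetric] by (simp add: circ_shift)
qed

lemma H1: "H 1 = H 0 + 1" using H_shift[of 0 1] by simp

lemma case_inj: assumes sm: "strict_mono H" shows "conj_to_rotation f"
proof -
  have hT: "hh \<in> Tcirc \<rightarrow> Tcirc" unfolding hh_def using circ_in by auto
  have "continuous_on {0..1} (hh \<circ> circ)"
  proof -
    have "continuous_on {0..1} (circ \<circ> H)"
      by (intro continuous_on_compose continuous_circ continuous_on_subset[OF H_cont]) auto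
    moreover have "hh \<circ> circ = circ \<circ> H" by (auto simp: hh_circ)
    ultimately show ?thesis by simp
  qed
  hence hc: "continuous_on Tcirc hh" using cont_via_circ hT by blast
  have him: "hh ` Tcirc = Tcirc"
  proof
    show "hh ` Tcirc \<subseteq> Tcirc" using hT by auto
    show "Tcirc \<subseteq> hh ` Tcirc"
    proof
      fix z assume "z \<in> Tcirc"
      then obtain t where t: "circ t = z" using circ_surj by blast
      define t' where "t' = H 0 + frac (t - H 0)"
      have "H 0 \<le> t'" "t' \<le> H 1" unfolding t'_def H1 using frac_lt_1[of "t - H 0"] frac_ge_0 by auto
      then obtain y where y: "0 \<le> y" "y \<le> 1" "H y = t'"
        using IVT'[of H 0 t' 1] continuous_on_subset[OF H_cont] by auto
      have "circ t' = circ t" unfolding t'_def frac_def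
        using circ_shift[of t "- floor (t - H 0)"] by simp
      hence "hh (circ y) = z" using y t by (simp add: hh_circ)
      thus "z \<in> hh ` Tcirc" using circ_in by blast
    qed
  qed
  have hinj: "inj_on hh Tcirc"
  proof (rule inj_onI)
    fix z1 z2 assume z: "z1 \<in> Tcirc" "z2 \<in> Tcirc" "hh z1 = hh z2"
    obtain x where x: "circ x = z1" using circ_surj z(1) by blast
    obtain y where y: "circ y = z2" using circ_surj z(2) by blast
    have "circ (H x) = circ (H y)" using z(3) unfolding x[symmetric] y[symmetric] hh_circ .
    then obtain k::int where "H y = H x + of_int k" using circ_eq_iff by blast
    hence "H y = H (x + of_int k)" by (simp add: H_shift)
    hence "y = x + of_int k" using sm by (simp add: strict_mono_eq)
    thus "z1 = z2" using x y by (simp add: circ_shift)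
  qed
  obtain g' where hom: "homeomorphism Tcirc Tcirc hh g'"
    using homeomorphism_compact[OF compact_sphere hc him hinj] by blast
  have "\<forall>z\<in>Tcirc. hh (f z) = circ \<rho> * hh z"
  proof
    fix z assume "z \<in> Tcirc"
    then obtain y where y: "circ y = z" using circ_surj by blast
    have "hh (f z) = circ (H (F y))" unfolding y[symmetric] f_circ hh_circ ..
    also have "\<dots> = circ \<rho> * circ (H y)" by (simp add: H_F circ_add mult.commute)
    finally show "hh (f z) = circ \<rho> * hh z" unfolding y[symmetric] hh_circ .
  qed
  thus ?thesis unfolding conj_to_rotation_def using hom by blast
qed

lemma case_noninj: assumes xy: "x0 < y0" "H x0 = H y0"
  shows "\<exists>m r. r > 0 \<and> (\<forall>i\<ge>1. tdist (circ m) ((f^^i) (circ m)) > r)"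
proof -
  define m where "m = (x0 + y0) / 2"
  define r where "r = (y0 - x0) / 2"
  have r0: "r > 0" using xy unfolding r_def by simp
  have Hm: "H m = H x0"
    using H_mono[of x0 m] H_mono[of m y0] xy unfolding m_def by (simp add: field_simps)
  have far: "\<bar>(F^^i) m + of_int k - m\<bar> > r" if i: "i \<ge> 1" for i k
  proof (rule ccontr)
    assume "\<not> ?thesis"
    hence "\<bar>(F^^i) m + of_int k - m\<bar> \<le> r" by simp
    hence w: "(F^^i) m + of_int k - m \<le> r" "- ((F^^i) m + of_int k - m) \<le> r" unfolding abs_le_iff by auto
    have mr: "m - r = x0" "m + r = y0" unfolding m_def r_def by (simp_all add: field_simps)
    have "x0 \<le> (F^^i) m + of_int k" "(F^^i) m + of_int k \<le> y0" using w mr by linarith+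
    hence "H ((F^^i) m + of_int k) = H m"
      using H_mono[of x0 "(F^^i) m + of_int k"] H_mono[of "(F^^i) m + of_int k" y0] xy Hm by simp
    hence "real i * \<rho> + of_int k = 0" by (simp add: H_shift H_Fn)
    thus False using irr_ne[OF i] by simp
  qed
  have "tdist (circ m) ((f^^i) (circ m)) > r" if i: "i \<ge> 1" for i
  proof -
    obtain k::int where "nd ((F^^i) m - m) = \<bar>(F^^i) m - m + of_int k\<bar>" using nd_bounds by blast
    moreover have "\<bar>(F^^i) m - m + of_int k\<bar> > r" using far[OF i, of k] by (simp add: algebra_simps)
    ultimately show ?thesis by (simp add: fn_circ tdist_circ)
  qed
  thus ?thesis using r0 by blast
qed

end


lemma nat_Inf_le: "x \<in> X \<Longrightarrow> Inf X \<le> (x::nat)"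
  by (simp add: Inf_nat_def Least_le)

lemma nat_Inf_ge: "X \<noteq> {} \<Longrightarrow> (\<And>x. x \<in> X \<Longrightarrow> z \<le> x) \<Longrightarrow> z \<le> Inf (X::nat set)"
  using Inf_nat_def1 by blast

lemma tdist_sym: "z \<in> Tcirc \<Longrightarrow> w \<in> Tcirc \<Longrightarrow> tdist z w = tdist w z"
proof -
  assume "z \<in> Tcirc" "w \<in> Tcirc"
  then obtain x y where "circ x = z" "circ y = w" using circ_surj by meson
  thus ?thesis using nd_minus[of "y - x"] by (auto simp: tdist_circ)
qed

lemma tdist_tri: "z \<in> Tcirc \<Longrightarrow> v \<in> Tcirc \<Longrightarrow> w \<in> Tcirc \<Longrightarrow> tdist z w \<le> tdist z v + tdist v w"
proof -
  assume "z \<in> Tcirc" "v \<in> Tcirc" "w \<in> Tcirc"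
  then obtain x u y where "circ x = z" "circ u = v" "circ y = w" using circ_surj by meson
  thus ?thesis using nd_triangle[of "u - x" "y - u"] by (auto simp: tdist_circ)
qed

lemma dyn_ge: "k < n \<Longrightarrow> tdist ((f^^k) z) ((f^^k) w) \<le> dyn_dist f n z w"
  unfolding dyn_dist_def by (rule Max_ge) auto

definition covers :: "(complex \<Rightarrow> complex) \<Rightarrow> nat \<Rightarrow> real \<Rightarrow> complex set \<Rightarrow> bool" where
  "covers f n \<epsilon> C \<longleftrightarrow> finite C \<and> C \<subseteq> Tcirc \<and> (\<forall>x\<in>Tcirc. \<exists>c\<in>C. dyn_dist f n c x < \<epsilon>)"

lemma cover_num_alt: "cover_num f n \<epsilon> = Inf {card C | C. covers f n \<epsilon> C}"
  unfolding cover_num_def covers_def by simp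

lemma sum_eq_mono:
  fixes a b :: "nat \<Rightarrow> int"
  assumes "\<And>k. k < n \<Longrightarrow> a k \<le> b k" "(\<Sum>k<n. a k) = (\<Sum>k<n. b k)" "k < n"
  shows "a k = b k"
proof -
  have "(\<Sum>k<n. b k - a k) = 0" using assms(2) by (simp add: sum_subtractf)
  hence "\<forall>k\<in>{..<n}. b k - a k = 0" using assms(1) by (subst sum_nonneg_eq_0_iff[symmetric]) auto
  thus ?thesis using assms(3) by auto
qed

context circ_homeo begin

lemma upper_cover:
  assumes N: "N \<ge> 1" "1 / real N < \<epsilon>" and n: "n \<ge> 1"
  shows "\<exists>C. covers f n \<epsilon> C \<and> card C \<le> n * N + 1"
proof -
  define t where "t k x = floor (real N * (F^^k) x)" for k x
  define \<sigma> where "\<sigma> x = (\<Sum>k<n. t k x)" for x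
  define A where "A = (\<Sum>k<n. t k 0)"
  have t_mono: "x \<le> y \<Longrightarrow> t k x \<le> t k y" for k x y
    unfolding t_def by (intro floor_mono mult_left_mono Fn_mono) auto
  have t_up: "t k x \<le> t k 0 + int N" if "x \<in> {0..<1}" for k x
  proof -
    have "(F^^k) x \<le> (F^^k) (0 + of_int 1)" using that by (intro Fn_mono) auto
    hence "(F^^k) x \<le> (F^^k) 0 + 1" using Fn_int[of k 0 1] by simp
    hence "real N * (F^^k) x \<le> real N * ((F^^k) 0 + 1)" by (intro mult_left_mono) auto
    hence "real N * (F^^k) x \<le> real N * (F^^k) 0 + real N" by (simp add: algebra_simps)
    hence "t k x \<le> floor (real N * (F^^k) 0 + of_int (int N))" unfolding t_def by (intro floor_mono) simp
    thus ?thesis unfolding t_def by simp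
  qed
  define S where "S = \<sigma> ` {0..<1}"
  have SA: "S \<subseteq> {A .. A + int (n * N)}"
  proof
    fix s assume "s \<in> S"
    then obtain x where x: "x \<in> {0..<1}" "s = \<sigma> x" unfolding S_def by blast
    have "A \<le> \<sigma> x" unfolding A_def \<sigma>_def using x by (intro sum_mono t_mono) auto
    moreover have "\<sigma> x \<le> (\<Sum>k<n. t k 0 + int N)" unfolding \<sigma>_def using x by (intro sum_mono t_up) auto
    moreover have "(\<Sum>k<n. t k 0 + int N) = A + int (n * N)" unfolding A_def by (simp add: sum.distrib)
    ultimately show "s \<in> {A .. A + int (n * N)}" using x by simp
  qed
  hence finS: "finite S" by (rule finite_subset) simp
  have cardS: "card S \<le> n * N + 1"
  proof -
    have "int (n * N) + 1 = int (n * N + 1)" by simp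
    hence eq: "nat (int (n * N) + 1) = n * N + 1" by (simp only: nat_int)
    have "card S \<le> card {A .. A + int (n * N)}" using SA by (intro card_mono) auto
    also have "\<dots> = nat (int (n * N) + 1)" by (simp add: card_atLeastAtMost_int)
    finally show ?thesis using eq by simp
  qed
  define rep where "rep s = (SOME x. x \<in> {0..<1} \<and> \<sigma> x = s)" for s
  have rep: "rep s \<in> {0..<1} \<and> \<sigma> (rep s) = s" if "s \<in> S" for s
    unfolding rep_def by (rule someI_ex) (use that S_def in auto)
  define C where "C = (\<lambda>s. circ (rep s)) ` S"
  have "covers f n \<epsilon> C"
    unfolding covers_def
  proof (intro conjI ballI)
    show "finite C" unfolding C_def using finS by simp
    show "C \<subseteq> Tcirc" unfolding C_def using circ_in by auto
    fix z assume "z \<in> Tcirc"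
    then obtain u where u: "u \<in> {0..<1}" "circ u = z" using circ_surj by blast
    define v where "v = rep (\<sigma> u)"
    have sS: "\<sigma> u \<in> S" unfolding S_def using u by blast
    have v: "v \<in> {0..<1}" "\<sigma> v = \<sigma> u" using rep[OF sS] unfolding v_def by auto
    have teq: "t k v = t k u" if "k < n" for k
    proof (cases "u \<le> v")
      case True
      show ?thesis using sum_eq_mono[of n "\<lambda>k. t k u" "\<lambda>k. t k v" k] t_mono[OF True] v(2) that
        unfolding \<sigma>_def by auto
    next
      case False
      show ?thesis using sum_eq_mono[of n "\<lambda>k. t k v" "\<lambda>k. t k u" k] t_mono[of v u] False v(2) that
        unfolding \<sigma>_def by auto
    qed
    have close: "tdist ((f^^k) (circ v)) ((f^^k) z) < \<epsilon>" if "k < n" for k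
    proof -
      have "\<bar>real N * (F^^k) v - real N * (F^^k) u\<bar> < 1"
        using teq[OF that] unfolding t_def by linarith
      hence "real N * \<bar>(F^^k) v - (F^^k) u\<bar> < 1" by (simp add: abs_mult right_diff_distrib[symmetric])
      hence "\<bar>(F^^k) v - (F^^k) u\<bar> < 1 / real N" using N by (simp add: field_simps)
      hence "\<bar>(F^^k) u - (F^^k) v\<bar> < \<epsilon>" using N by (simp add: abs_minus_commute)
      moreover have "nd ((F^^k) u - (F^^k) v) \<le> \<bar>(F^^k) u - (F^^k) v\<bar>" by (rule nd_le_abs)
      ultimately show ?thesis unfolding u(2)[symmetric] fn_circ tdist_circ by linarith
    qed
    have "dyn_dist f n (circ v) z < \<epsilon>"
    proof -
      have "0 \<in> {..<n}" using n by simp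
      hence ne: "(\<lambda>k. tdist ((f^^k) (circ v)) ((f^^k) z)) ` {..<n} \<noteq> {}" by blast
      show ?thesis unfolding dyn_dist_def using close by (subst Max_less_iff[OF _ ne]) auto
    qed
    moreover have "circ v \<in> C" unfolding C_def v_def using sS by blast
    ultimately show "\<exists>c\<in>C. dyn_dist f n c z < \<epsilon>" by blast
  qed
  moreover have "card C \<le> n * N + 1"
    unfolding C_def using card_image_le[OF finS] cardS le_trans by blast
  ultimately show ?thesis by blast
qed

lemma lower_cover:
  assumes w: "w \<in> Tcirc" and r: "\<And>i. i \<ge> 1 \<Longrightarrow> tdist w ((f^^i) w) > r"
    and e: "2 * \<epsilon> \<le> r" and C: "covers f n \<epsilon> C"
  shows "card C \<ge> n"
proof -
  define q where "q j = (g^^j) w" for j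
  have qT: "q j \<in> Tcirc" for j unfolding q_def using gn_T w by blast
  have "\<forall>j. \<exists>c\<in>C. dyn_dist f n c (q j) < \<epsilon>" using C qT unfolding covers_def by blast
  then obtain c where c: "\<And>j. c j \<in> C" "\<And>j. dyn_dist f n (c j) (q j) < \<epsilon>" by metis
  have cT: "c j \<in> Tcirc" for j using c C unfolding covers_def by blast
  have inj: "inj_on c {..<n}"
  proof (rule linorder_inj_onI)
    fix j k assume jk: "j < k" "k \<in> {..<n}"
    show "c j \<noteq> c k"
    proof
      assume ceq: "c j = c k"
      define z where "z = (f^^k) (c k)"
      have zT: "z \<in> Tcirc" unfolding z_def using fn_T cT by blast
      have a1: "tdist z ((f^^k) (q j)) < \<epsilon>"
        using dyn_ge[of k n f "c j" "q j"] c(2)[of j] jk ceq unfolding z_def by auto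
      have a2: "tdist z ((f^^k) (q k)) < \<epsilon>"
        using dyn_ge[of k n f "c k" "q k"] c(2)[of k] jk unfolding z_def by auto
      have e1: "(f^^k) (q k) = w" unfolding q_def using f_gn[OF w, of k k] by simp
      have e2: "(f^^k) (q j) = (f^^(k-j)) w" unfolding q_def using f_gn[OF w, of j k] jk by simp
      have wT: "(f^^(k-j)) w \<in> Tcirc" using fn_T w by blast
      have "tdist w ((f^^(k-j)) w) \<le> tdist w z + tdist z ((f^^(k-j)) w)"
        using tdist_tri[OF w zT wT] .
      also have "tdist w z = tdist z w" using tdist_sym[OF w zT] .
      finally have "tdist w ((f^^(k-j)) w) < 2 * \<epsilon>" using a1 a2 e1 e2 by simp
      moreover have "tdist w ((f^^(k-j)) w) > r" using r[of "k-j"] jk by simp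
      ultimately show False using e by simp
    qed
  qed auto
  have "n = card (c ` {..<n})" using card_image[OF inj] by simp
  also have "\<dots> \<le> card C" using c C unfolding covers_def by (intro card_mono) auto
  finally show ?thesis .
qed

end


lemma limsup_one:
  fixes u :: "nat \<Rightarrow> nat" and c :: real
  assumes lo: "\<And>n. n \<ge> 1 \<Longrightarrow> n \<le> u n" and hi: "\<And>n. n \<ge> 1 \<Longrightarrow> real (u n) \<le> real n * c"
    and c: "c \<ge> 1"
  shows "limsup (\<lambda>n. ereal (ln (real (u n)) / ln (real n))) = 1"
proof (rule antisym)
  have lnpos: "ln (real n) > 0" if "n \<ge> 2" for n :: nat using that by simp
  have ev_up: "eventually (\<lambda>n. ereal (ln (real (u n)) / ln (real n)) \<le> ereal (1 + ln c / ln (real n))) sequentially"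
    using eventually_ge_at_top[of 2]
  proof eventually_elim
    case (elim n)
    have un: "real (u n) > 0" using lo[of n] elim by simp
    have "ln (real (u n)) \<le> ln (real n * c)" using hi[of n] un elim by simp
    also have "\<dots> = ln (real n) + ln c" using elim c by (simp add: ln_mult)
    finally have "ln (real (u n)) / ln (real n) \<le> (ln (real n) + ln c) / ln (real n)"
      using lnpos[OF elim] by (intro divide_right_mono) auto
    also have "\<dots> = 1 + ln c / ln (real n)" using lnpos[OF elim] by (simp add: field_simps)
    finally show ?case by simp
  qed
  have lim0: "(\<lambda>n. ln c / ln (real n)) \<longlonglongrightarrow> 0"
    by (intro tendsto_divide_0[OF tendsto_const] filterlim_at_top_imp_at_infinity filterlim_compose[OF ln_at_top filterlim_real_sequentially])
  have tl: "(\<lambda>n. ereal (1 + ln c / ln (real n))) \<longlonglongrightarrow> ereal (1 + 0)"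
    by (intro lim_ereal[THEN iffD2] tendsto_intros lim0)
  have "limsup (\<lambda>n. ereal (1 + ln c / ln (real n))) = 1"
    using lim_imp_Limsup[OF trivial_limit_sequentially tl] by (simp add: one_ereal_def)
  thus "limsup (\<lambda>n. ereal (ln (real (u n)) / ln (real n))) \<le> 1"
    using Limsup_mono[OF ev_up] by simp
  have ev_lo: "eventually (\<lambda>n. 1 \<le> ereal (ln (real (u n)) / ln (real n))) sequentially"
    using eventually_ge_at_top[of 2]
  proof eventually_elim
    case (elim n)
    have "ln (real n) \<le> ln (real (u n))" using lo[of n] elim by simp
    hence "1 \<le> ln (real (u n)) / ln (real n)" using lnpos[OF elim] by (simp add: field_simps)
    thus ?case by (simp add: one_ereal_def)
  qed
  show "1 \<le> limsup (\<lambda>n. ereal (ln (real (u n)) / ln (real n)))"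
    by (rule le_Limsup[OF trivial_limit_sequentially ev_lo])
qed

theorem proposition3p3:
  fixes f :: "complex \<Rightarrow> complex"
  assumes "orient_pres_homeo f"
    and "rotation_number f \<notin> circ ` \<rat>"
    and "\<not> conj_to_rotation f"
  shows "hpol f = 1"
proof -
  have "\<exists>g. homeomorphism Tcirc Tcirc f g" using assms(1) unfolding orient_pres_homeo_def by blast
  then obtain g where hom: "homeomorphism Tcirc Tcirc f g" by blast
  define F where "F = (SOME F. is_lift f F)"
  have ex: "\<exists>F. is_lift f F" using assms(1) unfolding orient_pres_homeo_def by blast
  have lift: "is_lift f F" unfolding F_def by (rule someI_ex[OF ex])
  interpret circ_homeo f g F using hom lift by unfold_locales
  have rn: "rotation_number f = circ (rotnum F)" unfolding rotation_number_def rotnum_def F_def Let_def ..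
  have "rotnum F \<notin> \<rat>"
  proof
    assume "rotnum F \<in> \<rat>"
    hence "circ (rotnum F) \<in> circ ` \<rat>" by (rule imageI)
    thus False using assms(2) rn by simp
  qed
  then interpret circ_irr f g F by unfold_locales
  have "\<not> strict_mono H" using case_inj assms(3) by blast
  then obtain x0 y0 where xy: "x0 < y0" "\<not> H x0 < H y0" unfolding strict_mono_def by blast
  hence "H x0 = H y0" using H_mono[of x0 y0] by simp
  then obtain m r where mr: "r > 0" "\<And>i. i \<ge> 1 \<Longrightarrow> tdist (circ m) ((f^^i) (circ m)) > r"
    using case_noninj[OF xy(1)] by blast
  define L where "L \<epsilon> = limsup (\<lambda>n. ereal (ln (real (cover_num f n \<epsilon>)) / ln (real n)))" for \<epsilon>
  have L1: "L \<epsilon> = 1" if e: "0 < \<epsilon>" "\<epsilon> < r / 2" for \<epsilon>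
  proof -
    define N where "N = nat (ceiling (1 / \<epsilon>)) + 1"
    have N1: "N \<ge> 1" unfolding N_def by simp
    have "1 / \<epsilon> < real N" unfolding N_def by linarith
    hence NE: "1 / real N < \<epsilon>" using e N1 by (simp add: field_simps)
    have bounds: "n \<le> cover_num f n \<epsilon> \<and> cover_num f n \<epsilon> \<le> n * N + 1" if n: "n \<ge> 1" for n
    proof -
      obtain C where C: "covers f n \<epsilon> C" "card C \<le> n * N + 1" using upper_cover[OF N1 NE n] by blast
      have "cover_num f n \<epsilon> \<le> card C" unfolding cover_num_alt using C by (intro nat_Inf_le) blast
      moreover have "n \<le> cover_num f n \<epsilon>" unfolding cover_num_alt
      proof (rule nat_Inf_ge)
        show "{card C |C. covers f n \<epsilon> C} \<noteq> {}" using C by blast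
        fix k assume "k \<in> {card C |C. covers f n \<epsilon> C}"
        then obtain C' where "k = card C'" "covers f n \<epsilon> C'" by blast
        thus "n \<le> k" using lower_cover[OF circ_in mr(2) _ \<open>covers f n \<epsilon> C'\<close>] e by simp
      qed
      ultimately show ?thesis using C by simp
    qed
    show ?thesis unfolding L_def
    proof (rule limsup_one[where c = "real N + 1"])
      fix n :: nat assume "n \<ge> 1"
      thus "n \<le> cover_num f n \<epsilon>" using bounds by blast
      have "real (cover_num f n \<epsilon>) \<le> real (n * N + 1)" using bounds[OF \<open>n \<ge> 1\<close>] by linarith
      also have "\<dots> \<le> real n * (real N + 1)" using \<open>n \<ge> 1\<close> by (simp add: algebra_simps)
      finally show "real (cover_num f n \<epsilon>) \<le> real n * (real N + 1)" .
    qed simp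
  qed
  have "eventually (\<lambda>\<epsilon>. L \<epsilon> = 1) (at_right 0)"
    unfolding eventually_at_right_field using mr(1) L1 by (intro exI[of _ "r/2"]) auto
  hence "(L \<longlongrightarrow> 1) (at_right 0)" by (rule tendsto_eventually)
  hence "Lim (at_right 0) L = 1" by (intro tendsto_Lim) simp_all
  thus ?thesis unfolding hpol_def L_def .
qed


end
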